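(* Let $\mathcal U=(V,\tilde V,W,\tilde W,R)$ be an ordered gradient space and $V_0=\{u\in V: u\le v\text{ for some }v\in V_+\}$. Then $V_0$ is a lattice (with the order $\le$) if and only if $V_+$ is a lattice. In this case, for all $u_1,u_2\in V_+$, the $V_+$-least upper bound $\max(u_1,u_2)$ satisfies $\max(u_1,u_2)\le v$ for every $v\in V$ with $v\ge u_1$ and $v\ge u_2$, and the $V_+$-greatest lower bound $\min(u_1,u_2)$ satisfies $\min(u_1,u_2)\ge v$ for every $v\in V$ with $v\le u_1$ and $v\le u_2$.
   Context: A gradient space $\mathcal U=(V,\tilde V,W,\tilde W,R)$ consists of vector spaces $\tilde V,\tilde W$ over $\mathbf R$ or $\mathbf C$, a relation $R\subseteq\tilde V\times\tilde W$ closed under addition and under multiplication by positive scalars, and linear subspaces $V\subseteq\tilde V$, $W\subseteq\tilde W$ such that $V$ is a reflexive Banach space (norm $\|\cdot\|_V$), $W$ is a reflexive strictly convex Banach space, for every $(u,g)\in R\cap(V\times W)$ there is $g'\in W$ with $(-u,g')\in R$, and $R\cap(V\times W)$ is closed in $V\times W$. A linear preorder on $\tilde V$ is a relation $\le$ with: $a\le a$; $a\le b,\ b\le c\Rightarrow a\le c$; $b\le c\Rightarrow a+b\le a+c$; $a\le b,\ \alpha\in[0,\infty)\Rightarrow\alpha a\le\alpha b$. A preordered gradient space is a gradient space with a linear preorder $\le$ on $\tilde V$ such that if $u_i\in V$, $\psi\in\tilde V$, $u_i\le\psi$ for all $i$ and $u_i\to u$ in $V$, then $u\le\psi$. An ordered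 gradient space is a preordered gradient space such that $V$ is strictly convex and, for $u,v\in V$, $0\le u\le v$ implies $\|u\|_V\le\|v\|_V$ (then $\le$ is a partial order on $V$). Let $V_+=\{v\in V:v\ge0\}$. For $u_1,u_2\in V_+$: $\max(u_1,u_2)$ is the unique element $u$ of $\{u\in V:u\ge u_1,\ u\ge u_2\}$ of least $V$-norm; $\min(u_1,u_2)$ is the unique element of $\{v\in V:0\le v\le u_1,\ v\le u_2\}$ minimizing $\|\max(u_1,u_2)-v\|_V$. A subset $A\subseteq V$ is a lattice if every pair of elements of $A$ has a least upper bound and a greatest lower bound within $A$ (with respect to $\le$); $V_+$-least upper bounds and $V_+$-greatest lower bounds mean least upper / greatest lower bounds taken within $V_+$. *)

theory Defs
  imports "HOL-Analysis.Analysis"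
begin

definition reflexive_space :: "'a::real_normed_vector itself \<Rightarrow> bool" where
  "reflexive_space _ \<longleftrightarrow>
     (\<forall>\<Phi> :: ('a \<Rightarrow>\<^sub>L real) \<Rightarrow>\<^sub>L real. \<exists>x::'a. \<forall>f. blinfun_apply \<Phi> f = blinfun_apply f x)"

definition strictly_convex_space :: "'a::real_normed_vector itself \<Rightarrow> bool" where
  "strictly_convex_space _ \<longleftrightarrow>
     (\<forall>x y :: 'a. norm x = 1 \<and> norm y = 1 \<and> x \<noteq> y \<longrightarrow> norm ((1/2) *\<^sub>R (x + y)) < 1)"

(* Gradient space (V, Vt, W, Wt, R):  V and W are given as Banach-space types 'v, 'w,
   embedded linearly and injectively into the vector spaces 'vt, 'wt by iV, iW. *)
definition gradient_space ::
  "('v::banach \<Rightarrow> 'vt::real_vector) \<Rightarrow> ('w::banach \<Rightarrow> 'wt::real_vector)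
   \<Rightarrow> ('vt \<times> 'wt) set \<Rightarrow> bool" where
  "gradient_space iV iW R \<longleftrightarrow>
     linear iV \<and> inj iV \<and> linear iW \<and> inj iW \<and>
     (\<forall>a b c d. (a, b) \<in> R \<and> (c, d) \<in> R \<longrightarrow> (a + c, b + d) \<in> R) \<and>
     (\<forall>t a b. t > 0 \<and> (a, b) \<in> R \<longrightarrow> (t *\<^sub>R a, t *\<^sub>R b) \<in> R) \<and>
     reflexive_space TYPE('v) \<and>
     reflexive_space TYPE('w) \<and> strictly_convex_space TYPE('w) \<and>
     (\<forall>u g. (iV u, iW g) \<in> R \<longrightarrow> (\<exists>g'. (iV (- u), iW g') \<in> R)) \<and>
     closed {(u, g). (iV u, iW g) \<in> R}"

definition linear_preorder :: "('a::real_vector \<Rightarrow> 'a \<Rightarrow> bool) \<Rightarrow> bool" where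
  "linear_preorder le \<longleftrightarrow>
     (\<forall>a. le a a) \<and>
     (\<forall>a b c. le a b \<and> le b c \<longrightarrow> le a c) \<and>
     (\<forall>a b c. le b c \<longrightarrow> le (a + b) (a + c)) \<and>
     (\<forall>a b (\<alpha>::real). le a b \<and> \<alpha> \<ge> 0 \<longrightarrow> le (\<alpha> *\<^sub>R a) (\<alpha> *\<^sub>R b))"

definition preordered_gradient_space ::
  "('v::banach \<Rightarrow> 'vt::real_vector) \<Rightarrow> ('w::banach \<Rightarrow> 'wt::real_vector)
   \<Rightarrow> ('vt \<times> 'wt) set \<Rightarrow> ('vt \<Rightarrow> 'vt \<Rightarrow> bool) \<Rightarrow> bool" where
  "preordered_gradient_space iV iW R le \<longleftrightarrow>
     gradient_space iV iW R \<and> linear_preorder le \<and>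
     (\<forall>(u::nat \<Rightarrow> 'v) u0 \<psi>. (\<forall>i. le (iV (u i)) \<psi>) \<and> u \<longlonglongrightarrow> u0 \<longrightarrow> le (iV u0) \<psi>)"

definition ordered_gradient_space ::
  "('v::banach \<Rightarrow> 'vt::real_vector) \<Rightarrow> ('w::banach \<Rightarrow> 'wt::real_vector)
   \<Rightarrow> ('vt \<times> 'wt) set \<Rightarrow> ('vt \<Rightarrow> 'vt \<Rightarrow> bool) \<Rightarrow> bool" where
  "ordered_gradient_space iV iW R le \<longleftrightarrow>
     preordered_gradient_space iV iW R le \<and> strictly_convex_space TYPE('v) \<and>
     (\<forall>u v. le (iV 0) (iV u) \<and> le (iV u) (iV v) \<longrightarrow> norm u \<le> norm v)"

definition leV :: "('v \<Rightarrow> 'vt) \<Rightarrow> ('vt \<Rightarrow> 'vt \<Rightarrow> bool) \<Rightarrow> 'v \<Rightarrow> 'v \<Rightarrow> bool" where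
  "leV iV le u v \<longleftrightarrow> le (iV u) (iV v)"

definition Vplus :: "('v::zero \<Rightarrow> 'vt) \<Rightarrow> ('vt \<Rightarrow> 'vt \<Rightarrow> bool) \<Rightarrow> 'v set" where
  "Vplus iV le = {v. leV iV le 0 v}"

definition Vzero :: "('v::zero \<Rightarrow> 'vt) \<Rightarrow> ('vt \<Rightarrow> 'vt \<Rightarrow> bool) \<Rightarrow> 'v set" where
  "Vzero iV le = {u. \<exists>v \<in> Vplus iV le. leV iV le u v}"

definition is_lub_in :: "'a set \<Rightarrow> ('a \<Rightarrow> 'a \<Rightarrow> bool) \<Rightarrow> 'a \<Rightarrow> 'a \<Rightarrow> 'a \<Rightarrow> bool" where
  "is_lub_in A le x y z \<longleftrightarrow>
     z \<in> A \<and> le x z \<and> le y z \<and> (\<forall>w\<in>A. le x w \<and> le y w \<longrightarrow> le z w)"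

definition is_glb_in :: "'a set \<Rightarrow> ('a \<Rightarrow> 'a \<Rightarrow> bool) \<Rightarrow> 'a \<Rightarrow> 'a \<Rightarrow> 'a \<Rightarrow> bool" where
  "is_glb_in A le x y z \<longleftrightarrow>
     z \<in> A \<and> le z x \<and> le z y \<and> (\<forall>w\<in>A. le w x \<and> le w y \<longrightarrow> le w z)"

definition is_lattice :: "'a set \<Rightarrow> ('a \<Rightarrow> 'a \<Rightarrow> bool) \<Rightarrow> bool" where
  "is_lattice A le \<longleftrightarrow>
     (\<forall>x\<in>A. \<forall>y\<in>A. (\<exists>z. is_lub_in A le x y z) \<and> (\<exists>z. is_glb_in A le x y z))"

definition maxV :: "('v::real_normed_vector \<Rightarrow> 'vt) \<Rightarrow> ('vt \<Rightarrow> 'vt \<Rightarrow> bool) \<Rightarrow> 'v \<Rightarrow> 'v \<Rightarrow> 'v" where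
  "maxV iV le u1 u2 =
     (THE u. leV iV le u1 u \<and> leV iV le u2 u \<and>
        (\<forall>w. leV iV le u1 w \<and> leV iV le u2 w \<longrightarrow> norm u \<le> norm w))"

definition minV :: "('v::real_normed_vector \<Rightarrow> 'vt) \<Rightarrow> ('vt \<Rightarrow> 'vt \<Rightarrow> bool) \<Rightarrow> 'v \<Rightarrow> 'v \<Rightarrow> 'v" where
  "minV iV le u1 u2 =
     (THE v. leV iV le 0 v \<and> leV iV le v u1 \<and> leV iV le v u2 \<and>
        (\<forall>w. leV iV le 0 w \<and> leV iV le w u1 \<and> leV iV le w u2 \<longrightarrow>
             norm (maxV iV le u1 u2 - v) \<le> norm (maxV iV le u1 u2 - w)))"

end

theory Submission
  imports Defs
begin

lemma sc_general:
  fixes x y :: "'v::real_normed_vector"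
  assumes sc: "strictly_convex_space TYPE('v)" and e: "norm x = norm y" and ne: "x \<noteq> y"
  shows "norm ((1/2) *\<^sub>R (x + y)) < norm x"
proof -
  define r where "r = norm x"
  have r0: "r > 0" using e ne r_def by (metis norm_eq_zero norm_ge_zero order_less_le)
  have "norm ((1/2) *\<^sub>R ((1/r) *\<^sub>R x + (1/r) *\<^sub>R y)) < 1"
    using sc[unfolded strictly_convex_space_def, rule_format, of "(1/r) *\<^sub>R x" "(1/r) *\<^sub>R y"]
      r0 e ne r_def by auto
  moreover have "(1/2) *\<^sub>R ((1/r) *\<^sub>R x + (1/r) *\<^sub>R y) = (1/r) *\<^sub>R ((1/2) *\<^sub>R (x + y))"
    by (simp add: algebra_simps)
  ultimately have "(1/r) * norm ((1/2) *\<^sub>R (x + y)) < 1" using r0 by simp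
  thus ?thesis using r0 r_def by (simp add: field_simps)
qed

locale ordV =
  fixes L :: "'v::real_normed_vector \<Rightarrow> 'v \<Rightarrow> bool"
  assumes refl: "L a a" and trans: "L a b \<Longrightarrow> L b c \<Longrightarrow> L a c"
  and add: "L a b \<Longrightarrow> L (a + c) (b + c)"
  and scale: "L a b \<Longrightarrow> 0 \<le> t \<Longrightarrow> L (t *\<^sub>R a) (t *\<^sub>R b)"
  and nmono: "L 0 u \<Longrightarrow> L u v \<Longrightarrow> norm u \<le> norm v"
  and sc: "norm (x::'v) = norm y \<Longrightarrow> x \<noteq> y \<Longrightarrow> norm ((1/2) *\<^sub>R (x + y)) < norm x"
begin

lemma flip: "L a b \<Longrightarrow> L (c - b) (c - a)"
  using add[of a b "c - a - b"] by (simp add: algebra_simps)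

lemma add2: "L a b \<Longrightarrow> L c d \<Longrightarrow> L (a + c) (b + d)"
  using add[of a b c] add[of c d b] trans by (metis add.commute)

lemma antisym: "L a b \<Longrightarrow> L b a \<Longrightarrow> a = b"
proof -
  assume 1: "L a b" and 2: "L b a"
  have "L 0 (b - a)" using add[OF 1, of "-a"] by simp
  moreover have "L (b - a) 0" using add[OF 2, of "-a"] by simp
  ultimately have "norm (b - a) \<le> norm (0::'v)" using nmono by blast
  thus ?thesis by simp
qed

lemma mid_lo: "L a x \<Longrightarrow> L a y \<Longrightarrow> L a ((1/2) *\<^sub>R (x + y))"
  using add2[OF scale[of a x "1/2"] scale[of a y "1/2"]]
  by (simp add: scaleR_add_right[symmetric] scaleR_add_left[symmetric])

lemma mid_up: "L x a \<Longrightarrow> L y a \<Longrightarrow> L ((1/2) *\<^sub>R (x + y)) a"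
  using add2[OF scale[of x a "1/2"] scale[of y a "1/2"]]
  by (simp add: scaleR_add_right[symmetric] scaleR_add_left[symmetric])

definition "P = {v. L 0 v}"
definition "Z = {u. \<exists>v\<in>P. L u v}"

lemma P_sup:
  assumes lat: "is_lattice P L" and u1: "u1 \<in> P" and u2: "u2 \<in> P"
  shows "\<exists>z. z \<in> P \<and> L u1 z \<and> L u2 z \<and> (\<forall>v. L u1 v \<and> L u2 v \<longrightarrow> L z v)"
proof -
  obtain z where z: "is_lub_in P L u1 u2 z" using lat u1 u2 unfolding is_lattice_def by blast
  have "\<forall>v. L u1 v \<and> L u2 v \<longrightarrow> L z v"
  proof (intro allI impI)
    fix v assume "L u1 v \<and> L u2 v"
    moreover then have "v \<in> P" using u1 trans unfolding P_def by blast
    ultimately show "L z v" using z unfolding is_lub_in_def by blast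
  qed
  thus ?thesis using z unfolding is_lub_in_def by blast
qed

lemma Z_sup:
  assumes lat: "is_lattice P L" and x: "x \<in> Z" and y: "y \<in> Z"
  shows "\<exists>z. z \<in> Z \<and> L x z \<and> L y z \<and> (\<forall>v. L x v \<and> L y v \<longrightarrow> L z v)"
proof -
  obtain p where p: "p \<in> P" "L x p" using x unfolding Z_def by blast
  obtain q where q: "q \<in> P" "L y q" using y unfolding Z_def by blast
  define c where "c = (p - x) + (q - y)"
  have px: "L 0 (p - x)" using add[OF p(2), of "-x"] by simp
  have qy: "L 0 (q - y)" using add[OF q(2), of "-y"] by simp
  have c0: "L 0 c" using add2[OF px qy] unfolding c_def by simp
  have xc: "x + c \<in> P" using add2[OF p(1)[unfolded P_def, simplified] qy]
    unfolding P_def c_def by (simp add: algebra_simps)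
  have yc: "y + c \<in> P" using add2[OF q(1)[unfolded P_def, simplified] px]
    unfolding P_def c_def by (simp add: algebra_simps)
  obtain Lz where Lz: "Lz \<in> P" "L (x + c) Lz" "L (y + c) Lz"
    "\<forall>v. L (x + c) v \<and> L (y + c) v \<longrightarrow> L Lz v" using P_sup[OF lat xc yc] by blast
  define z where "z = Lz - c"
  have "L x z" using add[OF Lz(2), of "-c"] unfolding z_def by simp
  moreover have "L y z" using add[OF Lz(3), of "-c"] unfolding z_def by simp
  moreover have "\<forall>v. L x v \<and> L y v \<longrightarrow> L z v"
  proof (intro allI impI)
    fix v assume "L x v \<and> L y v"
    hence "L (x + c) (v + c) \<and> L (y + c) (v + c)" using add by blast
    hence "L Lz (v + c)" using Lz(4) by blast
    thus "L z v" using add[of Lz "v + c" "-c"] unfolding z_def by simp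
  qed
  moreover have "z \<in> Z"
  proof -
    have pq: "p + q \<in> P" using add2[OF p(1)[unfolded P_def, simplified] q(1)[unfolded P_def, simplified]]
      unfolding P_def by simp
    have "L (x + c) (p + c)" using add[OF p(2)] .
    moreover have "L (p + c) (p + q + c)" using add[OF q(1)[unfolded P_def, simplified], of "p + c"]
      by (simp add: algebra_simps)
    ultimately have "L (x + c) (p + q + c)" using trans by blast
    moreover have "L (y + c) (p + q + c)"
    proof -
      have "L (y + c) (q + c)" using add[OF q(2)] .
      moreover have "L (q + c) (p + q + c)" using add[OF p(1)[unfolded P_def, simplified], of "q + c"]
        by (simp add: algebra_simps)
      ultimately show ?thesis using trans by blast
    qed
    ultimately have "L Lz (p + q + c)" using Lz(4) by blast
    hence "L z (p + q)" using add[of Lz "p + q + c" "-c"] unfolding z_def by simp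
    thus ?thesis using pq unfolding Z_def by blast
  qed
  ultimately show ?thesis by blast
qed

lemma inf_from_sup:
  assumes "L x z" "L y z" "\<forall>v. L x v \<and> L y v \<longrightarrow> L z v"
  shows "L (x + y - z) x \<and> L (x + y - z) y \<and> (\<forall>w. L w x \<and> L w y \<longrightarrow> L w (x + y - z))"
proof -
  have 1: "L (x + y - z) x" using flip[OF assms(2), of "x + y"] by simp
  have 2: "L (x + y - z) y" using flip[OF assms(1), of "x + y"] by simp
  have "\<forall>w. L w x \<and> L w y \<longrightarrow> L w (x + y - z)"
  proof (intro allI impI)
    fix w assume w: "L w x \<and> L w y"
    have "L y (x + y - w)" using flip[of w x "x + y"] w by simp
    moreover have "L x (x + y - w)" using flip[of w y "x + y"] w by simp
    ultimately have "L z (x + y - w)" using assms(3) by blast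
    thus "L w (x + y - z)" using flip[of z "x + y - w" "x + y"] by simp
  qed
  thus ?thesis using 1 2 by blast
qed

lemma P_imp_Z: assumes lat: "is_lattice P L" shows "is_lattice Z L"
  unfolding is_lattice_def
proof (intro ballI conjI)
  fix x y assume x: "x \<in> Z" and y: "y \<in> Z"
  obtain z where z: "z \<in> Z" "L x z" "L y z" "\<forall>v. L x v \<and> L y v \<longrightarrow> L z v"
    using Z_sup[OF lat x y] by blast
  show "\<exists>z. is_lub_in Z L x y z" using z unfolding is_lub_in_def by blast
  have i: "L (x + y - z) x \<and> L (x + y - z) y \<and> (\<forall>w. L w x \<and> L w y \<longrightarrow> L w (x + y - z))"
    using inf_from_sup[OF z(2-4)] .
  have "x + y - z \<in> Z" using i x trans unfolding Z_def by blast
  thus "\<exists>z. is_glb_in Z L x y z" using i unfolding is_glb_in_def by blast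
qed

lemma Z_imp_P: assumes lat: "is_lattice Z L" shows "is_lattice P L"
  unfolding is_lattice_def
proof (intro ballI conjI)
  have PZ: "P \<subseteq> Z" unfolding Z_def using refl by blast
  fix x y assume x: "x \<in> P" and y: "y \<in> P"
  hence xZ: "x \<in> Z" and yZ: "y \<in> Z" using PZ by auto
  obtain z where z: "is_lub_in Z L x y z" using lat xZ yZ unfolding is_lattice_def by blast
  have "z \<in> P" using z x trans unfolding is_lub_in_def P_def by blast
  thus "\<exists>z. is_lub_in P L x y z" using z PZ unfolding is_lub_in_def by blast
  obtain g where g: "is_glb_in Z L x y g" using lat xZ yZ unfolding is_lattice_def by blast
  have 0: "(0::'v) \<in> Z" using PZ refl unfolding P_def by blast
  obtain h where h: "is_lub_in Z L g 0 h" using lat g 0 unfolding is_lattice_def is_glb_in_def by blast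
  have hx: "L h x" using h g xZ x unfolding is_lub_in_def is_glb_in_def P_def by blast
  have hy: "L h y" using h g yZ y unfolding is_lub_in_def is_glb_in_def P_def by blast
  have hP: "h \<in> P" using h unfolding is_lub_in_def P_def by blast
  have "\<forall>w\<in>P. L w x \<and> L w y \<longrightarrow> L w h"
  proof (intro ballI impI)
    fix w assume "w \<in> P" "L w x \<and> L w y"
    hence "L w g" using g PZ unfolding is_glb_in_def by blast
    moreover have "L g h" using h unfolding is_lub_in_def by blast
    ultimately show "L w h" using trans by blast
  qed
  thus "\<exists>z. is_glb_in P L x y z" using hx hy hP unfolding is_glb_in_def by blast
qed

lemma max_eq:
  assumes u1: "u1 \<in> P" and z: "L u1 z" "L u2 z" "\<forall>v. L u1 v \<and> L u2 v \<longrightarrow> L z v"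
  shows "(THE u. L u1 u \<and> L u2 u \<and> (\<forall>w. L u1 w \<and> L u2 w \<longrightarrow> norm u \<le> norm w)) = z"
proof (rule the_equality)
  have z0: "L 0 z" using u1 z(1) trans unfolding P_def by blast
  show "L u1 z \<and> L u2 z \<and> (\<forall>w. L u1 w \<and> L u2 w \<longrightarrow> norm z \<le> norm w)"
    using z z0 nmono by blast
  fix u assume u: "L u1 u \<and> L u2 u \<and> (\<forall>w. L u1 w \<and> L u2 w \<longrightarrow> norm u \<le> norm w)"
  have "L z u" using u z(3) by blast
  hence "norm z \<le> norm u" using z0 nmono by blast
  moreover have "norm u \<le> norm z" using u z by blast
  ultimately have e: "norm u = norm z" by simp
  show "u = z"
  proof (rule ccontr)
    assume ne: "u \<noteq> z"
    have "L u1 ((1/2) *\<^sub>R (u + z)) \<and> L u2 ((1/2) *\<^sub>R (u + z))" using mid_lo u z by blast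
    hence "norm u \<le> norm ((1/2) *\<^sub>R (u + z))" using u by blast
    thus False using sc[OF e ne] by simp
  qed
qed

lemma min_eq:
  assumes G: "L 0 G" "L G u1" "L G u2" "\<forall>w. L w u1 \<and> L w u2 \<longrightarrow> L w G" and M: "L u1 M"
  shows "(THE v. L 0 v \<and> L v u1 \<and> L v u2 \<and>
        (\<forall>w. L 0 w \<and> L w u1 \<and> L w u2 \<longrightarrow> norm (M - v) \<le> norm (M - w))) = G"
proof (rule the_equality)
  have MG: "L 0 (M - G)" using add[OF trans[OF G(2) M], of "-G"] by simp
  have key: "\<And>w. L w u1 \<Longrightarrow> L w u2 \<Longrightarrow> norm (M - G) \<le> norm (M - w)"
  proof -
    fix w assume "L w u1" "L w u2"
    hence "L w G" using G(4) by blast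
    hence "L (M - G) (M - w)" using flip by blast
    thus "norm (M - G) \<le> norm (M - w)" using MG nmono by blast
  qed
  show "L 0 G \<and> L G u1 \<and> L G u2 \<and>
        (\<forall>w. L 0 w \<and> L w u1 \<and> L w u2 \<longrightarrow> norm (M - G) \<le> norm (M - w))"
    using G key by blast
  fix v assume v: "L 0 v \<and> L v u1 \<and> L v u2 \<and>
        (\<forall>w. L 0 w \<and> L w u1 \<and> L w u2 \<longrightarrow> norm (M - v) \<le> norm (M - w))"
  have e: "norm (M - v) = norm (M - G)" using v G key[of v] by (meson order_antisym)
  show "v = G"
  proof (rule ccontr)
    assume ne: "v \<noteq> G"
    hence ne': "M - v \<noteq> M - G" by simp
    define m where "m = (1/2) *\<^sub>R (v + G)"
    have "L 0 m \<and> L m u1 \<and> L m u2" unfolding m_def using mid_lo mid_up v G by blast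
    hence "norm (M - v) \<le> norm (M - m)" using v by blast
    moreover have "M - m = (1/2) *\<^sub>R ((M - v) + (M - G))" unfolding m_def
      by (simp add: algebra_simps scaleR_add_left[symmetric])
    ultimately show False using sc[OF e ne'] by simp
  qed
qed

end

theorem mainTheorem18:
  fixes iV :: "'v::banach \<Rightarrow> 'vt::real_vector"
    and iW :: "'w::banach \<Rightarrow> 'wt::real_vector"
    and R :: "('vt \<times> 'wt) set"
    and le :: "'vt \<Rightarrow> 'vt \<Rightarrow> bool"
  assumes "ordered_gradient_space iV iW R le"
  shows "(is_lattice (Vzero iV le) (leV iV le) \<longleftrightarrow> is_lattice (Vplus iV le) (leV iV le)) \<and>
         (is_lattice (Vplus iV le) (leV iV le) \<longrightarrow>
            (\<forall>u1\<in>Vplus iV le. \<forall>u2\<in>Vplus iV le.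
               is_lub_in (Vplus iV le) (leV iV le) u1 u2 (maxV iV le u1 u2) \<and>
               (\<forall>v. leV iV le u1 v \<and> leV iV le u2 v \<longrightarrow> leV iV le (maxV iV le u1 u2) v) \<and>
               is_glb_in (Vplus iV le) (leV iV le) u1 u2 (minV iV le u1 u2) \<and>
               (\<forall>v. leV iV le v u1 \<and> leV iV le v u2 \<longrightarrow> leV iV le v (minV iV le u1 u2))))"
proof -
  have og: "preordered_gradient_space iV iW R le" "strictly_convex_space TYPE('v)"
    "\<forall>u v. le (iV 0) (iV u) \<and> le (iV u) (iV v) \<longrightarrow> norm u \<le> norm v"
    using assms unfolding ordered_gradient_space_def by auto
  hence gs: "gradient_space iV iW R" and lp: "linear_preorder le"
    unfolding preordered_gradient_space_def by auto
  have lin: "linear iV" using gs unfolding gradient_space_def by auto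
  interpret O: ordV "leV iV le"
  proof
    fix a b c :: 'v and t :: real and u v x y :: 'v
    show "leV iV le a a" using lp unfolding linear_preorder_def leV_def by auto
    show "leV iV le a b \<Longrightarrow> leV iV le b c \<Longrightarrow> leV iV le a c"
      using lp unfolding linear_preorder_def leV_def by blast
    show "leV iV le a b \<Longrightarrow> leV iV le (a + c) (b + c)"
    proof -
      assume h: "leV iV le a b"
      have "le (iV c + iV a) (iV c + iV b)" using lp h unfolding linear_preorder_def leV_def by blast
      thus ?thesis using linear_add[OF lin] unfolding leV_def by (simp add: add.commute)
    qed
    show "leV iV le a b \<Longrightarrow> 0 \<le> t \<Longrightarrow> leV iV le (t *\<^sub>R a) (t *\<^sub>R b)"
    proof -
      assume h: "leV iV le a b" "0 \<le> t"
      have "le (t *\<^sub>R iV a) (t *\<^sub>R iV b)" using lp h unfolding linear_preorder_def leV_def by blast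
      thus ?thesis using linear_scale[OF lin] unfolding leV_def by simp
    qed
    show "leV iV le 0 u \<Longrightarrow> leV iV le u v \<Longrightarrow> norm u \<le> norm v"
      using og(3) unfolding leV_def by blast
    show "norm x = norm y \<Longrightarrow> x \<noteq> y \<Longrightarrow> norm ((1/2) *\<^sub>R (x + y)) < norm x"
      using sc_general[OF og(2)] by blast
  qed
  have PP: "Vplus iV le = O.P" unfolding Vplus_def O.P_def ..
  have ZZ: "Vzero iV le = O.Z" unfolding Vzero_def O.Z_def PP ..
  have part1: "is_lattice (Vzero iV le) (leV iV le) \<longleftrightarrow> is_lattice (Vplus iV le) (leV iV le)"
    unfolding PP ZZ using O.P_imp_Z O.Z_imp_P by blast
  have part2: "\<forall>u1\<in>Vplus iV le. \<forall>u2\<in>Vplus iV le.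
               is_lub_in (Vplus iV le) (leV iV le) u1 u2 (maxV iV le u1 u2) \<and>
               (\<forall>v. leV iV le u1 v \<and> leV iV le u2 v \<longrightarrow> leV iV le (maxV iV le u1 u2) v) \<and>
               is_glb_in (Vplus iV le) (leV iV le) u1 u2 (minV iV le u1 u2) \<and>
               (\<forall>v. leV iV le v u1 \<and> leV iV le v u2 \<longrightarrow> leV iV le v (minV iV le u1 u2))"
    if lat: "is_lattice (Vplus iV le) (leV iV le)"
  proof (intro ballI)
    fix u1 u2 assume u1: "u1 \<in> Vplus iV le" and u2: "u2 \<in> Vplus iV le"
    obtain z where z: "z \<in> O.P" "leV iV le u1 z" "leV iV le u2 z"
      "\<forall>v. leV iV le u1 v \<and> leV iV le u2 v \<longrightarrow> leV iV le z v"
      using O.P_sup[OF lat[unfolded PP] u1[unfolded PP] u2[unfolded PP]] by blast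
    have mx: "maxV iV le u1 u2 = z" unfolding maxV_def
      using O.max_eq[OF u1[unfolded PP] z(2-4)] .
    define G where "G = u1 + u2 - z"
    have i: "leV iV le G u1 \<and> leV iV le G u2 \<and> (\<forall>w. leV iV le w u1 \<and> leV iV le w u2 \<longrightarrow> leV iV le w G)"
      using O.inf_from_sup[OF z(2-4)] unfolding G_def .
    have G0: "leV iV le 0 G" using i u1 u2 unfolding PP O.P_def by blast
    have mn: "minV iV le u1 u2 = G" unfolding minV_def mx
      using O.min_eq[OF G0 _ _ _ z(2)] i by blast
    show "is_lub_in (Vplus iV le) (leV iV le) u1 u2 (maxV iV le u1 u2) \<and>
               (\<forall>v. leV iV le u1 v \<and> leV iV le u2 v \<longrightarrow> leV iV le (maxV iV le u1 u2) v) \<and>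
               is_glb_in (Vplus iV le) (leV iV le) u1 u2 (minV iV le u1 u2) \<and>
               (\<forall>v. leV iV le v u1 \<and> leV iV le v u2 \<longrightarrow> leV iV le v (minV iV le u1 u2))"
      unfolding mx mn is_lub_in_def is_glb_in_def PP using z i G0 unfolding O.P_def by blast
  qed
  show ?thesis using part1 part2 by blast
qed

end
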